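(* Let $\bar D$ be any distribution over $\mathcal{X}\times\{0,1\}$ with random variables $(\mathsf X,\bar{\mathsf Y})\sim\bar D$, and let $f\colon\mathcal X\to[0,1]$ be any randomised classifier. Let $\tau\in[0,1]$ and put $c:=\frac{1}{1+\tau}\in[\tfrac12,1]$. Then: (i) if $\mathrm{FNR}(f;\bar D)<1$, then $\mathrm{DI}(f;\bar D)\ge\tau \iff \mathrm{CS}_{\mathrm{bal}}(f;\bar D,c)\ge 1-c$; (ii) if $0<\mathrm{FNR}(f;\bar D)<1$, then $\mathrm{DI}^\diamond(f;\bar D)\ge\tau \iff \mathrm{CS}_{\mathrm{bal}}(f;\bar D,c)\in[1-c,\,c]$.
   Context: A randomised classifier $f\colon\mathcal X\to[0,1]$ predicts label $1$ on $x$ with probability $f(x)$. For a distribution $\bar D$ of $(\mathsf X,\bar{\mathsf Y})$ on $\mathcal X\times\{0,1\}$: $\mathrm{FNR}(f;\bar D)=\mathbb E_{\mathsf X\mid\bar{\mathsf Y}=1}[1-f(\mathsf X)]$, $\mathrm{FPR}(f;\bar D)=\mathbb E_{\mathsf X\mid\bar{\mathsf Y}=0}[f(\mathsf X)]$. The balanced cost-sensitive risk is $\mathrm{CS}_{\mathrm{bal}}(f;\bar D,c)=(1-c)\,\mathrm{FNR}(f;\bar D)+c\,\mathrm{FPR}(f;\bar D)$. The disparate impact factor is $\mathrm{DI}(f;\bar D)=\frac{\mathrm{FPR}(f;\bar D)}{1-\mathrm{FNR}(f;\bar D)}$, and its symmetrised version is $\mathrm{DI}^\diamond(f;\bar D)=\min\big(\mathrm{DI}(f;\bar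 D),\mathrm{DI}(1-f;\bar D)\big)$, where $1-f$ is the classifier $x\mapsto 1-f(x)$. *)

theory Defs
  imports "HOL-Probability.Probability"
begin

text \<open>A distribution over X x {0,1} is a probability measure D on the product
  space (label 1 = True, label 0 = False).  Conditional expectation of g(X) given
  label b is E[g(X) 1{Y=b}] / P(Y=b).\<close>

definition cond_exp_label :: "('x \<times> bool) measure \<Rightarrow> bool \<Rightarrow> ('x \<Rightarrow> real) \<Rightarrow> real" where
  "cond_exp_label D b g =
     (\<integral>p. (if snd p = b then g (fst p) else 0) \<partial>D) / measure D {p \<in> space D. snd p = b}"

definition FNR :: "('x \<Rightarrow> real) \<Rightarrow> ('x \<times> bool) measure \<Rightarrow> real" where
  "FNR f D = cond_exp_label D True (\<lambda>x. 1 - f x)"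

definition FPR :: "('x \<Rightarrow> real) \<Rightarrow> ('x \<times> bool) measure \<Rightarrow> real" where
  "FPR f D = cond_exp_label D False f"

definition CS_bal :: "('x \<Rightarrow> real) \<Rightarrow> ('x \<times> bool) measure \<Rightarrow> real \<Rightarrow> real" where
  "CS_bal f D c = (1 - c) * FNR f D + c * FPR f D"

definition DI :: "('x \<Rightarrow> real) \<Rightarrow> ('x \<times> bool) measure \<Rightarrow> real" where
  "DI f D = FPR f D / (1 - FNR f D)"

definition DI_sym :: "('x \<Rightarrow> real) \<Rightarrow> ('x \<times> bool) measure \<Rightarrow> real" where
  "DI_sym f D = min (DI f D) (DI (\<lambda>x. 1 - f x) D)"

end

theory Submission
  imports Defs
begin

theorem lemma1:
  fixes M :: "'x measure" and D :: "('x \<times> bool) measure"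
    and f :: "'x \<Rightarrow> real" and \<tau> c :: real
  assumes D: "prob_space D"
    and sets_D: "sets D = sets (M \<Otimes>\<^sub>M count_space (UNIV :: bool set))"
    and f_meas: "f \<in> borel_measurable M"
    and f_range: "\<And>x. x \<in> space M \<Longrightarrow> 0 \<le> f x \<and> f x \<le> 1"
    and tau: "0 \<le> \<tau>" "\<tau> \<le> 1"
    and c_def: "c = 1 / (1 + \<tau>)"
  shows "(FNR f D < 1 \<longrightarrow> (DI f D \<ge> \<tau> \<longleftrightarrow> CS_bal f D c \<ge> 1 - c))
       \<and> (0 < FNR f D \<and> FNR f D < 1 \<longrightarrow>
            (DI_sym f D \<ge> \<tau> \<longleftrightarrow> CS_bal f D c \<in> {1 - c .. c}))"
proof -
  interpret prob_space D by (rule D)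
  have spD: "space D = space (M \<Otimes>\<^sub>M count_space (UNIV :: bool set))"
    using sets_D sets_eq_imp_space_eq by blast
  have fst_m: "fst \<in> measurable D M"
    using measurable_fst measurable_cong_sets[OF sets_D refl] by blast
  have snd_m: "snd \<in> measurable D (count_space (UNIV :: bool set))"
    using measurable_snd measurable_cong_sets[OF sets_D refl] by blast
  have fin: "p \<in> space D \<Longrightarrow> 0 \<le> f (fst p) \<and> f (fst p) \<le> 1" for p
    using f_range spD by (auto simp: space_pair_measure)
  define S where "S b = {p \<in> space D. snd p = b}" for b
  have S_sets: "S b \<in> sets D" for b
  proof -
    have "S b = snd -` {b} \<inter> space D" by (auto simp: S_def)
    thus ?thesis using measurable_sets[OF snd_m, of "{b}"] by simp
  qed
  define I where "I b = (\<integral>p. (if snd p = b then f (fst p) else 0) \<partial>D)" for b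
  define P where "P b = measure D (S b)" for b
  have int: "integrable D (\<lambda>p. if snd p = b then f (fst p) else 0)" for b
  proof (rule integrable_const_bound[where B=1])
    show "AE p in D. norm (if snd p = b then f (fst p) else 0) \<le> 1"
      using fin by (intro AE_I2) auto
    have "(\<lambda>p. f (fst p)) \<in> borel_measurable D"
      using measurable_comp[OF fst_m f_meas] by (simp add: o_def)
    moreover have "{p \<in> space D. snd p = b} \<in> sets D" using S_sets S_def by simp
    ultimately show "(\<lambda>p. if snd p = b then f (fst p) else 0) \<in> borel_measurable D"
      by measurable
  qed
  have key: "(\<integral>p. (if snd p = b then 1 - f (fst p) else 0) \<partial>D) = P b - I b" for b
  proof -
    have "(\<integral>p. (if snd p = b then 1 - f (fst p) else 0) \<partial>D)
        = (\<integral>p. (indicator (S b) p - (if snd p = b then f (fst p) else 0)) \<partial>D)"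
      by (rule Bochner_Integration.integral_cong) (auto simp: S_def indicator_def)
    moreover have "integrable D (indicator (S b) :: _ \<Rightarrow> real)"
      using S_sets by (simp add: integrable_indicator_iff emeasure_finite less_top[symmetric])
    ultimately show ?thesis
      using int[of b] S_sets by (simp add: Bochner_Integration.integral_diff P_def I_def)
  qed
  have FNR_eq: "FNR f D = (P True - I True) / P True"
    using key[of True] by (simp add: FNR_def cond_exp_label_def P_def S_def)
  have FPR_eq: "FPR f D = I False / P False"
    by (simp add: FPR_def cond_exp_label_def P_def S_def I_def)
  have FNR1_eq: "FNR (\<lambda>x. 1 - f x) D = I True / P True"
    by (simp add: FNR_def cond_exp_label_def P_def S_def I_def)
  have FPR1_eq: "FPR (\<lambda>x. 1 - f x) D = (P False - I False) / P False"
    using key[of False] by (simp add: FPR_def cond_exp_label_def P_def S_def)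
  have F1: "P True \<noteq> 0 \<Longrightarrow> FNR (\<lambda>x. 1 - f x) D = 1 - FNR f D"
    unfolding FNR_eq FNR1_eq by (simp add: field_simps)
  have F2: "P True = 0 \<Longrightarrow> FNR f D = 0" unfolding FNR_eq by simp
  have F3: "P False \<noteq> 0 \<Longrightarrow> FPR (\<lambda>x. 1 - f x) D = 1 - FPR f D"
    unfolding FPR_eq FPR1_eq by (simp add: field_simps)
  have F4: "P False = 0 \<Longrightarrow> FPR (\<lambda>x. 1 - f x) D = 0 \<and> FPR f D = 0"
    unfolding FPR_eq FPR1_eq by simp
  have cpos: "c > 0" "1 - c = \<tau> * c" using tau unfolding c_def by (auto simp: field_simps)
  have part1: "a < 1 \<Longrightarrow> (\<tau> \<le> b / (1 - a) \<longleftrightarrow> 1 - c \<le> (1 - c) * a + c * b)" for a b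
  proof -
    assume "a < 1"
    have "\<tau> \<le> b / (1 - a) \<longleftrightarrow> \<tau> * (1 - a) \<le> b" using \<open>a < 1\<close> by (simp add: pos_le_divide_eq)
    also have "\<dots> \<longleftrightarrow> c * (\<tau> * (1 - a)) \<le> c * b" using cpos by simp
    also have "\<dots> \<longleftrightarrow> 1 - c \<le> (1 - c) * a + c * b"
    proof -
      have "(1 - c) * a + c * b - (1 - c) = c * b - c * (\<tau> * (1 - a))"
        unfolding cpos(2) by (simp add: algebra_simps)
      thus ?thesis by linarith
    qed
    finally show ?thesis .
  qed
  show ?thesis
  proof (intro conjI impI)
    assume "FNR f D < 1"
    thus "(DI f D \<ge> \<tau> \<longleftrightarrow> CS_bal f D c \<ge> 1 - c)"
      using part1 by (simp add: DI_def CS_bal_def)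
  next
    assume h: "0 < FNR f D \<and> FNR f D < 1"
    hence PT: "P True \<noteq> 0" using F2 by auto
    have d1: "DI f D \<ge> \<tau> \<longleftrightarrow> CS_bal f D c \<ge> 1 - c"
      using part1 h by (simp add: DI_def CS_bal_def)
    show "DI_sym f D \<ge> \<tau> \<longleftrightarrow> CS_bal f D c \<in> {1 - c .. c}"
    proof (cases "P False = 0")
      case True
      hence z: "DI (\<lambda>x. 1 - f x) D = 0" "DI f D = 0" "FPR f D = 0" using F4 by (auto simp: DI_def)
      have "(1 - c) * FNR f D \<le> c"
      proof -
        have "0 \<le> 1 - c" using cpos tau by simp
        hence "(1 - c) * FNR f D \<le> 1 - c" using h by (simp add: mult_left_le)
        moreover have "\<tau> * c \<le> c" using cpos tau by simp
        ultimately show ?thesis using cpos(2) by linarith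
      qed
      thus ?thesis using z d1 by (simp add: CS_bal_def DI_sym_def)
    next
      case False
      have e: "DI (\<lambda>x. 1 - f x) D = (1 - FPR f D) / FNR f D"
        using F1[OF PT] F3[OF False] by (simp add: DI_def)
      define a where "a = FNR f D"
      define b where "b = FPR f D"
      have "\<tau> \<le> (1 - b) / a \<longleftrightarrow> \<tau> * a \<le> 1 - b" using h a_def by (simp add: pos_le_divide_eq)
      also have "\<dots> \<longleftrightarrow> c * (\<tau> * a) \<le> c * (1 - b)" using cpos by simp
      also have "\<dots> \<longleftrightarrow> (1 - c) * a + c * b \<le> c"
      proof -
        have "c - ((1 - c) * a + c * b) = c * (1 - b) - c * (\<tau> * a)"
          unfolding cpos(2) by (simp add: algebra_simps)
        thus ?thesis by linarith
      qed
      finally have d2: "DI (\<lambda>x. 1 - f x) D \<ge> \<tau> \<longleftrightarrow> CS_bal f D c \<le> c"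
        using e a_def b_def by (simp add: CS_bal_def)
      show ?thesis using d1 d2 by (auto simp: DI_sym_def)
    qed
  qed
qed
end
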